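(* Let $G=(\mathcal{V},\mathcal{E})$ be a simple connected graph and $\mathcal{R}\subseteq\mathcal{V}$ a resolution set of $G$. If a pair $\{i,j\}$ of distinct nodes is invisible with respect to $\mathcal{R}$, then $i\notin\mathcal{R}$, $j\notin\mathcal{R}$, and $\Delta_{ij}=1$. Likewise, if $\{i,j\}$ is ambiguous with respect to $\mathbf{P}_{\mathcal{R}}$, then $i\notin\mathcal{R}$, $j\notin\mathcal{R}$ and $\Delta_{ij}=1$ (computed from $\mathbf{P}_{\mathcal{R}}$).
   Context: All graphs are simple, undirected and connected. $h_{ij}$ is the shortest-path distance between nodes $i,j$. For an ordered landmark set $\mathcal{M}=\{A_1,\dots,A_m\}\subseteq\mathcal{V}$, $\mathbf{P}_{\mathcal{M}}(i)=\langle h_{iA_1},\dots,h_{iA_m}\rangle$, and $\mathbf{P}_{\mathcal{M}}$ is the matrix with these rows. $\mathcal{M}$ is a resolution set if the $\mathbf{P}_{\mathcal{M}}(i)$ are pairwise distinct. For nodes $i,j$ define $\Delta^k_{ij}=|h_{iA_k}-h_{jA_k}|$ and $\Delta_{ij}=\max_{1\le k\le m}\Delta^k_{ij}$. A pair $\{i,j\}$ is invisible with respect to $\mathcal{M}$ if adding the edge $\{i,j\}$ (when absent) or removing it (when present) does not change any entry of $\mathbf{P}_{\mathcal{M}}$. A pair $\{i,j\}$ is ambiguous with respect to a given matrix $\mathbf{P}_{\mathcal{M}}$ if there exist two simple connected graphs on $\mathcal{V}$, both having distance vector matrix $\mathbf{P}_{\mathcal{M}}$ for $\mathcal{M}$,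 such that $\{i,j\}$ is an edge of one and not of the other. *)

theory Defs
  imports Main "HOL-Library.Extended_Nat"
begin

definition simple_graph :: "'a set \<Rightarrow> 'a set set \<Rightarrow> bool" where
  "simple_graph V E \<longleftrightarrow> finite V \<and>
     (\<forall>e\<in>E. \<exists>u v. u \<noteq> v \<and> u \<in> V \<and> v \<in> V \<and> e = {u, v})"

definition adj_rel :: "'a set set \<Rightarrow> ('a \<times> 'a) set" where
  "adj_rel E = {(u, v). {u, v} \<in> E}"

definition walk_len :: "'a set set \<Rightarrow> 'a \<Rightarrow> 'a \<Rightarrow> nat \<Rightarrow> bool" where
  "walk_len E u v n \<longleftrightarrow> (u, v) \<in> adj_rel E ^^ n"

definition connected_graph :: "'a set \<Rightarrow> 'a set set \<Rightarrow> bool" where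
  "connected_graph V E \<longleftrightarrow> simple_graph V E \<and> V \<noteq> {} \<and>
     (\<forall>u\<in>V. \<forall>v\<in>V. \<exists>n. walk_len E u v n)"

(* shortest-path distance h_uv (meaningful when u, v are connected) *)
definition dist :: "'a set set \<Rightarrow> 'a \<Rightarrow> 'a \<Rightarrow> nat" where
  "dist E u v = (LEAST n. walk_len E u v n)"

definition edist :: "'a set set \<Rightarrow> 'a \<Rightarrow> 'a \<Rightarrow> enat" where
  "edist E u v = (if \<exists>n. walk_len E u v n then enat (dist E u v) else \<infinity>)"

definition dvec :: "'a set set \<Rightarrow> 'a set \<Rightarrow> 'a \<Rightarrow> 'a \<Rightarrow> nat" where
  "dvec E M i = (\<lambda>A. if A \<in> M then dist E i A else 0)"

definition resolution_set :: "'a set \<Rightarrow> 'a set set \<Rightarrow> 'a set \<Rightarrow> bool" where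
  "resolution_set V E M \<longleftrightarrow> M \<subseteq> V \<and> inj_on (dvec E M) V"

definition Delta :: "'a set set \<Rightarrow> 'a set \<Rightarrow> 'a \<Rightarrow> 'a \<Rightarrow> nat" where
  "Delta E M i j = Max ((\<lambda>A. nat \<bar>int (dist E i A) - int (dist E j A)\<bar>) ` M)"

definition toggle :: "'a set set \<Rightarrow> 'a \<Rightarrow> 'a \<Rightarrow> 'a set set" where
  "toggle E i j = (if {i, j} \<in> E then E - {{i, j}} else insert {i, j} E)"

(* toggling {i,j} changes no entry of P_M (distances may become infinite) *)
definition invisible :: "'a set \<Rightarrow> 'a set set \<Rightarrow> 'a set \<Rightarrow> 'a \<Rightarrow> 'a \<Rightarrow> bool" where
  "invisible V E M i j \<longleftrightarrow>
     (\<forall>x\<in>V. \<forall>A\<in>M. edist (toggle E i j) x A = edist E x A)"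

definition ambiguous :: "'a set \<Rightarrow> 'a set set \<Rightarrow> 'a set \<Rightarrow> 'a \<Rightarrow> 'a \<Rightarrow> bool" where
  "ambiguous V E M i j \<longleftrightarrow>
     (\<exists>E1 E2. connected_graph V E1 \<and> connected_graph V E2 \<and>
        (\<forall>x\<in>V. \<forall>A\<in>M. dist E1 x A = dist E x A) \<and>
        (\<forall>x\<in>V. \<forall>A\<in>M. dist E2 x A = dist E x A) \<and>
        {i, j} \<in> E1 \<and> {i, j} \<notin> E2)"

end

theory Submission
  imports Defs
begin

lemma walk_0: "walk_len E u v 0 \<longleftrightarrow> u = v"
  by (simp add: walk_len_def)

lemma walk_1: "walk_len E u v 1 \<longleftrightarrow> {u,v} \<in> E"
  by (simp add: walk_len_def adj_rel_def relpow_1[unfolded One_nat_def])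

lemma walk_Suc0: "walk_len E u v (Suc 0) \<longleftrightarrow> {u,v} \<in> E"
  using walk_1 by simp

lemma walk_trans: "walk_len E u v m \<Longrightarrow> walk_len E v w n \<Longrightarrow> walk_len E u w (m + n)"
  unfolding walk_len_def by (auto simp: relpow_add)

lemma dist_walk: "\<exists>n. walk_len E u v n \<Longrightarrow> walk_len E u v (dist E u v)"
  unfolding dist_def by (rule LeastI_ex)

lemma dist_le: "walk_len E u v n \<Longrightarrow> dist E u v \<le> n"
  unfolding dist_def by (rule Least_le)

lemma dist_one: "\<exists>n. walk_len E u v n \<Longrightarrow> (dist E u v = 1 \<longleftrightarrow> u \<noteq> v \<and> {u,v} \<in> E)"
proof
  assume w: "\<exists>n. walk_len E u v n" and d: "dist E u v = 1"
  from dist_walk[OF w] d have "{u,v} \<in> E" by (simp add: walk_1 walk_Suc0)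
  moreover have "u \<noteq> v"
  proof
    assume "u = v" then have "walk_len E u v 0" by (simp add: walk_0)
    from dist_le[OF this] d show False by simp
  qed
  ultimately show "u \<noteq> v \<and> {u,v} \<in> E" by simp
next
  assume w: "\<exists>n. walk_len E u v n" and h: "u \<noteq> v \<and> {u,v} \<in> E"
  then have "dist E u v \<le> 1" by (intro dist_le) (simp add: walk_1 walk_Suc0)
  moreover have "dist E u v \<noteq> 0"
    using dist_walk[OF w] h by (metis walk_0)
  ultimately show "dist E u v = 1" by simp
qed

lemma dist_tri: "{i,j} \<in> E \<Longrightarrow> \<exists>n. walk_len E j A n \<Longrightarrow> dist E i A \<le> dist E j A + 1"
proof -
  assume e: "{i,j} \<in> E" and w: "\<exists>n. walk_len E j A n"
  have "walk_len E i j 1" using e by (simp add: walk_1 walk_Suc0)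
  from dist_le[OF walk_trans[OF this dist_walk[OF w]]] show ?thesis by simp
qed

lemma diff_le1:
  assumes "{i,j} \<in> E" "\<exists>n. walk_len E j A n" "\<exists>n. walk_len E i A n"
  shows "nat \<bar>int (dist E i A) - int (dist E j A)\<bar> \<le> 1"
proof -
  have "{j,i} \<in> E" using assms(1) by (simp add: insert_commute)
  from dist_tri[OF assms(1,2)] dist_tri[OF this assms(3)] show ?thesis by linarith
qed

lemma conn_walk: "connected_graph V E \<Longrightarrow> u \<in> V \<Longrightarrow> v \<in> V \<Longrightarrow> \<exists>n. walk_len E u v n"
  by (simp add: connected_graph_def)

lemma delta_one:
  assumes "finite R" "i \<in> V" "j \<in> V" "i \<noteq> j" "inj_on (dvec E R) V"
    and le: "\<forall>A\<in>R. nat \<bar>int (dist E i A) - int (dist E j A)\<bar> \<le> 1"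
  shows "Delta E R i j = 1"
proof -
  have "dvec E R i \<noteq> dvec E R j" using assms(2-5) by (meson inj_on_def)
  then obtain A where A: "A \<in> R" "dist E i A \<noteq> dist E j A"
    unfolding dvec_def by (metis (no_types, lifting) ext)
  let ?S = "(\<lambda>A. nat \<bar>int (dist E i A) - int (dist E j A)\<bar>) ` R"
  have "Max ?S \<le> 1" using assms(1) A(1) le by (subst Max_le_iff) auto
  moreover have "1 \<le> Max ?S" using assms(1) A by (intro Max_ge_iff[THEN iffD2]) (auto intro!: bexI[of _ A])
  ultimately show ?thesis unfolding Delta_def by simp
qed

theorem lemma2:
  fixes V :: "'a set" and E :: "'a set set" and R :: "'a set" and i j :: 'a
  assumes "connected_graph V E"
    and "resolution_set V E R"
    and "i \<in> V" and "j \<in> V" and "i \<noteq> j"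
  shows "(invisible V E R i j \<longrightarrow> i \<notin> R \<and> j \<notin> R \<and> Delta E R i j = 1)
       \<and> (ambiguous V E R i j \<longrightarrow> i \<notin> R \<and> j \<notin> R \<and> Delta E R i j = 1)"
proof -
  have RV: "R \<subseteq> V" and inj: "inj_on (dvec E R) V" using assms(2) by (auto simp: resolution_set_def)
  have "finite V" using assms(1) by (simp add: connected_graph_def simple_graph_def)
  then have finR: "finite R" using RV by (rule finite_subset[rotated])
  have wE: "\<And>u v. u \<in> V \<Longrightarrow> v \<in> V \<Longrightarrow> \<exists>n. walk_len E u v n" using conn_walk[OF assms(1)] by blast
  have ji: "{j,i} = {i,j}" by blast
  show ?thesis
  proof (intro conjI impI)
    assume inv: "invisible V E R i j"
    define E' where "E' = toggle E i j"
    have eq: "\<And>x A. x \<in> V \<Longrightarrow> A \<in> R \<Longrightarrow> (\<exists>n. walk_len E' x A n) \<and> dist E' x A = dist E x A"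
    proof -
      fix x A assume x: "x \<in> V" and A: "A \<in> R"
      have "edist E' x A = edist E x A" using inv x A by (simp add: invisible_def E'_def)
      moreover have w: "\<exists>n. walk_len E x A n" using wE[OF x] A RV by blast
      ultimately have "edist E' x A = enat (dist E x A)" by (simp add: edist_def)
      then show "(\<exists>n. walk_len E' x A n) \<and> dist E' x A = dist E x A"
        unfolding edist_def by (cases "\<exists>n. walk_len E' x A n") simp_all
    qed
    have notin: "\<And>a b. a \<in> V \<Longrightarrow> b \<in> V \<Longrightarrow> a \<noteq> b \<Longrightarrow> {a,b} = {i,j} \<Longrightarrow> b \<notin> R"
    proof
      fix a b assume a: "a \<in> V" and b: "b \<in> V" and ab: "a \<noteq> b" and e: "{a,b} = {i,j}" and bR: "b \<in> R"
      from eq[OF a bR] have w': "\<exists>n. walk_len E' a b n" and d: "dist E' a b = dist E a b" by auto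
      have "dist E' a b = 1 \<longleftrightarrow> {a,b} \<in> E'" using dist_one[OF w'] ab by simp
      moreover have "dist E a b = 1 \<longleftrightarrow> {a,b} \<in> E" using dist_one[OF wE[OF a b]] ab by simp
      moreover have "{a,b} \<in> E' \<longleftrightarrow> {a,b} \<notin> E" using e by (auto simp: E'_def toggle_def)
      ultimately show False using d by simp
    qed
    show "i \<notin> R" using notin[OF assms(4,3)] assms(5) ji by auto
    show "j \<notin> R" using notin[OF assms(3,4)] assms(5) by auto
    show "Delta E R i j = 1"
    proof (rule delta_one[OF finR assms(3,4,5) inj], intro ballI)
      fix A assume A: "A \<in> R"
      show "nat \<bar>int (dist E i A) - int (dist E j A)\<bar> \<le> 1"
      proof (cases "{i,j} \<in> E")
        case True
        have AV: "A \<in> V" using A RV by blast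
        show ?thesis using diff_le1[OF True wE[OF assms(4) AV] wE[OF assms(3) AV]] .
      next
        case False
        then have "{i,j} \<in> E'" by (simp add: E'_def toggle_def)
        with eq[OF assms(3) A] eq[OF assms(4) A] diff_le1[of i j E' A] show ?thesis by simp
      qed
    qed
  next
    assume "ambiguous V E R i j"
    then obtain E1 E2 where c1: "connected_graph V E1" and c2: "connected_graph V E2"
      and d1: "\<forall>x\<in>V. \<forall>A\<in>R. dist E1 x A = dist E x A"
      and d2: "\<forall>x\<in>V. \<forall>A\<in>R. dist E2 x A = dist E x A"
      and e1: "{i,j} \<in> E1" and e2: "{i,j} \<notin> E2" unfolding ambiguous_def by blast
    have notin: "\<And>a b. a \<in> V \<Longrightarrow> b \<in> V \<Longrightarrow> a \<noteq> b \<Longrightarrow> {a,b} = {i,j} \<Longrightarrow> b \<notin> R"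
    proof
      fix a b assume a: "a \<in> V" and b: "b \<in> V" and ab: "a \<noteq> b" and e: "{a,b} = {i,j}" and bR: "b \<in> R"
      have "dist E1 a b = 1" using dist_one[OF conn_walk[OF c1 a b]] ab e e1 by simp
      moreover have "dist E2 a b \<noteq> 1" using dist_one[OF conn_walk[OF c2 a b]] ab e e2 by simp
      ultimately show False using d1 d2 a bR by auto
    qed
    show "i \<notin> R" using notin[OF assms(4,3)] assms(5) ji by auto
    show "j \<notin> R" using notin[OF assms(3,4)] assms(5) by auto
    show "Delta E R i j = 1"
    proof (rule delta_one[OF finR assms(3,4,5) inj], intro ballI)
      fix A assume A: "A \<in> R"
      have "nat \<bar>int (dist E1 i A) - int (dist E1 j A)\<bar> \<le> 1"
        using diff_le1[OF e1 conn_walk[OF c1 assms(4)] conn_walk[OF c1 assms(3)]] A RV by blast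
      then show "nat \<bar>int (dist E i A) - int (dist E j A)\<bar> \<le> 1" using d1 A assms(3,4) by simp
    qed
  qed
qed

end
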